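(* Assume $\beta S\le Z$ almost surely (in particular under $(\beta,\alpha)$-bounded estimates). Then for every $z>0$, $$u_{\mathrm{SRPT\text{-}B}}(z)-u_{\mathrm{SRPT\text{-}SE}}(z)\le 3z\max\{1-\beta,0\}\,\mathbb{E}[S\mathbf 1(Z>z)].$$
   Context: $(S,Z)$ is a random pair of positive reals (true size and estimated size of a random job), and $0<\beta\le\alpha$ are constants. Rank functions on job states $(s,z,a)$ with age $a\in[0,s)$: SRPT-B: $r(s,z,a)=\min\{|z-a|,z\}$; SRPT-SE: $r(s,z,a)=\frac{z}{s}(s-a)$. For a policy $\pi$ with rank function $r_\pi$, $u_\pi(x)=\mathbb{E}\big[\,\big|\{a\in[0,S): r_\pi(S,Z,a)\le x\}\big|^2\big]$, where $|\cdot|$ is Lebesgue measure. *)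

theory Defs
  imports "HOL-Probability.Probability"
begin

text \<open>Rank functions r(s,z,a) on job states (true size s, estimate z, age a).\<close>

definition srpt_b_rank :: "real \<Rightarrow> real \<Rightarrow> real \<Rightarrow> real" where
  "srpt_b_rank s z a = min \<bar>z - a\<bar> z"

definition srpt_se_rank :: "real \<Rightarrow> real \<Rightarrow> real \<Rightarrow> real" where
  "srpt_se_rank s z a = z / s * (s - a)"

definition rank_level_set ::
  "(real \<Rightarrow> real \<Rightarrow> real \<Rightarrow> real) \<Rightarrow> real \<Rightarrow> real \<Rightarrow> real \<Rightarrow> real set" where
  "rank_level_set r s z x = {a \<in> {0..<s}. r s z a \<le> x}"

definition u_rank ::
  "'w measure \<Rightarrow> ('w \<Rightarrow> real) \<Rightarrow> ('w \<Rightarrow> real) \<Rightarrow> (real \<Rightarrow> real \<Rightarrow> real \<Rightarrow> real) \<Rightarrow> real \<Rightarrow> ennreal"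
  where
  "u_rank M S Z r x = (\<integral>\<^sup>+ \<omega>. (emeasure lborel (rank_level_set r (S \<omega>) (Z \<omega>) x))\<^sup>2 \<partial>M)"

end

theory Submission
  imports Defs
begin


definition LSE :: "real \<Rightarrow> real \<Rightarrow> real \<Rightarrow> real" where
  "LSE s w x = (if w \<le> x then s else x * s / w)"

lemma se_set:
  assumes "s > 0" "w > 0" "x > 0"
  shows "rank_level_set srpt_se_rank s w x = (if w \<le> x then {0..<s} else atLeastLessThan (s - x * s / w) s)"
proof (cases "w \<le> x")
  case True
  have "w / s * (s - a) \<le> x" if "0 \<le> a" "a < s" for a
  proof -
    have "w / s * (s - a) \<le> w / s * s" using that assms by (intro mult_left_mono) auto
    also have "\<dots> = w" using assms by simp
    finally show ?thesis using True by simp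
  qed
  then show ?thesis using True unfolding rank_level_set_def srpt_se_rank_def by auto
next
  case False
  have eq: "(w / s * (s - a) \<le> x) = (s - x * s / w \<le> a)" for a
  proof -
    have "(w / s * (s - a) \<le> x) = (w * (s - a) \<le> x * s)" using assms by (simp add: field_simps)
    also have "\<dots> = ((s - a) \<le> x * s / w)" using assms by (simp add: field_simps)
    finally show ?thesis by linarith
  qed
  have "x * s / w < s" using False assms by (simp add: field_simps)
  then have pos: "0 < s - x * s / w" by simp
  show ?thesis
  proof (rule set_eqI)
    fix a
    show "a \<in> rank_level_set srpt_se_rank s w x \<longleftrightarrow> a \<in> (if w \<le> x then {0..<s} else atLeastLessThan (s - x * s / w) s)"
      unfolding rank_level_set_def srpt_se_rank_def using False eq[of a] pos by auto
  qed
qed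
lemma se_meas:
  assumes "s > 0" "w > 0" "x > 0"
  shows "emeasure lborel (rank_level_set srpt_se_rank s w x) = ennreal (LSE s w x)"
  using assms by (auto simp: se_set LSE_def)

lemma real_ineq:
  fixes s w x \<beta> :: real
  assumes "s > 0" "w > x" "x > 0" "\<beta> * s \<le> w" "\<beta> > 0"
  shows "(max 0 (min s (w+x) - (w-x)))^2 \<le> (x * s / w)^2 + 3 * x * max (1-\<beta>) 0 * s"
proof (cases "s \<le> w")
  case True
  have w0: "w > 0" using assms by simp
  have "(s - w + x) * w \<le> x * s"
  proof -
    have "(w - x) * (s - w) \<le> 0" using True assms by (intro mult_nonneg_nonpos) auto
    then show ?thesis by (simp add: algebra_simps)
  qed
  then have le: "s - w + x \<le> x * s / w" using w0 by (simp add: field_simps)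
  have L: "max 0 (min s (w+x) - (w-x)) \<le> max 0 (s - w + x)" by simp
  have "max 0 (s - w + x) \<le> x * s / w" using le assms w0 by simp
  then have "(max 0 (min s (w+x) - (w-x)))^2 \<le> (x * s / w)^2"
    using L by (intro power_mono) auto
  moreover have "0 \<le> 3 * x * max (1-\<beta>) 0 * s" using assms by simp
  ultimately show ?thesis by linarith
next
  case False
  have w0: "w > 0" using assms by simp
  have b1: "(1-\<beta>) * s \<ge> s - w" using assms by (simp add: algebra_simps)
  have "max (1-\<beta>) 0 \<ge> 1 - \<beta>" by simp
  then have "max (1-\<beta>) 0 * s \<ge> s - w" using b1 assms by (smt (verit) mult_right_mono)
  then have r1: "3 * x * max (1-\<beta>) 0 * s \<ge> 3 * x * (s - w)" using assms
    by (smt (verit) mult_left_mono mult.assoc)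
  have "x * s / w \<ge> x" using False assms w0 by (simp add: field_simps)
  then have r2: "(x * s / w)^2 \<ge> x^2" using assms by (intro power_mono) auto
  define d where "d = s - w"
  have d0: "d > 0" using False d_def by simp
  define L where "L = max 0 (min s (w+x) - (w-x))"
  have L0: "L \<ge> 0" "L \<le> 2*x" "L \<le> d + x" unfolding L_def d_def using assms d0 d_def by auto
  have "L^2 \<le> x^2 + 3*x*d"
  proof (cases "d \<ge> x")
    case True
    have "L^2 \<le> (2*x)^2" using L0 by (intro power_mono) auto
    moreover have "x * x \<le> x * d" using True assms by (intro mult_left_mono) auto
    ultimately show ?thesis by (simp add: power2_eq_square)
  next
    case False
    have "L^2 \<le> (d+x)^2" using L0 by (intro power_mono) auto
    moreover have "d * d \<le> d * x" using False d0 by (intro mult_left_mono) auto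
    ultimately show ?thesis by (simp add: power2_eq_square algebra_simps)
  qed
  then show ?thesis using r1 r2 unfolding L_def d_def by linarith
qed


lemma pw:
  fixes s w x \<beta> :: real
  assumes "s > 0" "w > 0" "x > 0" "\<beta> > 0" "\<beta> * s \<le> w"
  shows "(emeasure lborel (rank_level_set srpt_b_rank s w x))\<^sup>2
    \<le> (ennreal (LSE s w x))\<^sup>2 + ennreal (3 * x * max (1-\<beta>) 0) * ennreal (s * indicator {x<..} w)"
proof (cases "w \<le> x")
  case True
  have "rank_level_set srpt_b_rank s w x = {0..<s}"
    using True assms unfolding rank_level_set_def srpt_b_rank_def by auto
  then show ?thesis using True assms by (simp add: LSE_def)
next
  case False
  define lo where "lo = w - x"
  define hi where "hi = min s (w+x)"
  have sub: "rank_level_set srpt_b_rank s w x \<subseteq> {lo..hi}"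
    using False assms unfolding rank_level_set_def srpt_b_rank_def lo_def hi_def by auto
  have "emeasure lborel (rank_level_set srpt_b_rank s w x) \<le> emeasure lborel {lo..hi}"
    by (intro emeasure_mono sub) auto
  also have "\<dots> \<le> ennreal (max 0 (hi - lo))"
    by (cases "lo \<le> hi") auto
  finally have e: "emeasure lborel (rank_level_set srpt_b_rank s w x) \<le> ennreal (max 0 (hi - lo))" .
  have "(emeasure lborel (rank_level_set srpt_b_rank s w x))\<^sup>2 \<le> (ennreal (max 0 (hi - lo)))\<^sup>2"
    using e by (intro power_mono) auto
  also have "\<dots> = ennreal ((max 0 (hi - lo))\<^sup>2)" by (subst ennreal_power) auto
  also have "\<dots> \<le> ennreal ((x * s / w)^2 + 3 * x * max (1-\<beta>) 0 * s)"
    unfolding lo_def hi_def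
    by (intro ennreal_leI real_ineq) (use False assms in auto)
  also have "\<dots> = (ennreal (LSE s w x))\<^sup>2 + ennreal (3 * x * max (1-\<beta>) 0) * ennreal (s * indicator {x<..} w)"
  proof -
    have l: "LSE s w x = x * s / w" using False by (simp add: LSE_def)
    have i: "s * indicator {x<..} w = s" using False by simp
    have n1: "0 \<le> x * s / w" "0 \<le> 3 * x * max (1-\<beta>) 0" using assms by auto
    have "ennreal ((x * s / w)^2 + 3 * x * max (1-\<beta>) 0 * s)
        = ennreal ((x * s / w)^2) + ennreal (3 * x * max (1-\<beta>) 0 * s)"
      using n1 assms by (intro ennreal_plus) auto
    also have "ennreal ((x * s / w)^2) = (ennreal (x * s / w))^2"
      using n1 by (subst ennreal_power) auto
    also have "ennreal (3 * x * max (1-\<beta>) 0 * s) = ennreal (3 * x * max (1-\<beta>) 0) * ennreal s"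
      using n1 assms by (intro ennreal_mult) auto
    finally show ?thesis unfolding l i .
  qed
  finally show ?thesis .
qed

theorem mainTheorem9:
  fixes M :: "'w measure" and S Z :: "'w \<Rightarrow> real" and \<alpha> \<beta> z :: real
  assumes "prob_space M"
    and "S \<in> borel_measurable M" and "Z \<in> borel_measurable M"
    and "\<And>\<omega>. \<omega> \<in> space M \<Longrightarrow> S \<omega> > 0 \<and> Z \<omega> > 0"
    and "0 < \<beta>" and "\<beta> \<le> \<alpha>"
    and "AE \<omega> in M. \<beta> * S \<omega> \<le> Z \<omega>"
    and "z > 0"
  shows "u_rank M S Z srpt_b_rank z
           \<le> u_rank M S Z srpt_se_rank z
             + ennreal (3 * z * max (1 - \<beta>) 0)
               * (\<integral>\<^sup>+ \<omega>. ennreal (S \<omega> * indicator {z<..} (Z \<omega>)) \<partial>M)"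
proof -
  interpret prob_space M by fact
  note pos = assms(4)
  have ae: "AE \<omega> in M. (emeasure lborel (rank_level_set srpt_b_rank (S \<omega>) (Z \<omega>) z))\<^sup>2
    \<le> (ennreal (LSE (S \<omega>) (Z \<omega>) z))\<^sup>2 + ennreal (3 * z * max (1-\<beta>) 0) * ennreal (S \<omega> * indicator {z<..} (Z \<omega>))"
    using assms(7) pos by (auto intro!: pw[OF _ _ assms(8) assms(5)])
  have "u_rank M S Z srpt_b_rank z \<le> (\<integral>\<^sup>+ \<omega>. (ennreal (LSE (S \<omega>) (Z \<omega>) z))\<^sup>2 + ennreal (3 * z * max (1-\<beta>) 0) * ennreal (S \<omega> * indicator {z<..} (Z \<omega>)) \<partial>M)"
    unfolding u_rank_def by (rule nn_integral_mono_AE[OF ae])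
  also have "\<dots> = (\<integral>\<^sup>+ \<omega>. (ennreal (LSE (S \<omega>) (Z \<omega>) z))\<^sup>2 \<partial>M) + (\<integral>\<^sup>+ \<omega>. ennreal (3 * z * max (1-\<beta>) 0) * ennreal (S \<omega> * indicator {z<..} (Z \<omega>)) \<partial>M)"
    using assms(2,3) by (intro nn_integral_add) (auto simp: LSE_def)
  also have "(\<integral>\<^sup>+ \<omega>. ennreal (3 * z * max (1-\<beta>) 0) * ennreal (S \<omega> * indicator {z<..} (Z \<omega>)) \<partial>M)
     = ennreal (3 * z * max (1-\<beta>) 0) * (\<integral>\<^sup>+ \<omega>. ennreal (S \<omega> * indicator {z<..} (Z \<omega>)) \<partial>M)"
    using assms(2,3) by (intro nn_integral_cmult) auto
  also have "(\<integral>\<^sup>+ \<omega>. (ennreal (LSE (S \<omega>) (Z \<omega>) z))\<^sup>2 \<partial>M) = u_rank M S Z srpt_se_rank z"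
    unfolding u_rank_def using pos assms(8)
    by (intro nn_integral_cong) (simp add: se_meas)
  finally show ?thesis .
qed

end
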